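(* There exists a transcendental entire function $f$ such that $f^{(s)}(\overline{\mathbb{Q}}) \subseteq \mathbb{Q}(i)$ for all integers $s \geq 0$.
   Context: $\overline{\mathbb{Q}}$ denotes the set of algebraic numbers in $\mathbb{C}$. A transcendental entire function is an entire function $\mathbb{C}\to\mathbb{C}$ that is not a polynomial. $f^{(s)}$ denotes the $s$-th derivative of $f$, with $f^{(0)}=f$. *)

theory Defs
  imports "HOL-Analysis.Analysis" "HOL-Computational_Algebra.Polynomial"
begin

definition gauss_rat :: "complex set" where
  "gauss_rat = {of_rat a + \<i> * of_rat b | a b. True}"

definition transcendental_entire :: "(complex \<Rightarrow> complex) \<Rightarrow> bool" where
  "transcendental_entire f \<longleftrightarrow> f holomorphic_on UNIV \<and> \<not> (\<exists>p. \<forall>z. f z = poly p z)"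

end

theory Submission
  imports Defs
begin

lemma countable_alg: "countable {z::complex. algebraic z}"
proof -
  define P where "P = {p::complex poly. (\<forall>i. coeff p i \<in> \<int>) \<and> p \<noteq> 0}"
  have cI: "countable (\<int> :: complex set)" unfolding Ints_def by simp
  have "P \<subseteq> Poly ` lists \<int>"
  proof
    fix p assume "p \<in> P"
    hence "set (coeffs p) \<subseteq> \<int>" unfolding P_def by (auto simp: coeffs_def)
    hence "coeffs p \<in> lists \<int>" by auto
    thus "p \<in> Poly ` lists \<int>" by (metis Poly_coeffs image_eqI)
  qed
  hence cP: "countable P" using cI by (meson countable_image countable_lists countable_subset)
  have "{z::complex. algebraic z} \<subseteq> (\<Union>p\<in>P. {x. poly p x = 0})"
    unfolding P_def algebraic_def by blast
  moreover have "countable (\<Union>p\<in>P. {x. poly p x = 0})"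
    using cP by (intro countable_UN) (auto simp: P_def intro: countable_finite poly_roots_finite)
  ultimately show ?thesis by (rule countable_subset)
qed


lemma pderiv_lin_pow_gen:
  assumes "pderiv Y = 1"
  shows "pderiv (Y^(Suc k) * R) = Y^k * (smult (of_nat (Suc k)) R + Y * pderiv (R::complex poly))"
  unfolding pderiv_mult pderiv_power_Suc assms
  by (simp add: algebra_simps)

lemma pderiv_lin_pow:
  "pderiv ([:-a,1:]^(Suc k) * R) = [:-a,1:]^k * (smult (of_nat (Suc k)) R + [:-a,1:] * pderiv (R::complex poly))"
  by (rule pderiv_lin_pow_gen) (simp add: pderiv_pCons)

lemma pderiv_vanish:
  "s < k \<Longrightarrow> poly ((pderiv^^s) ([:-a,1:]^k * (R::complex poly))) a = 0"
proof (induction s arbitrary: k R)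
  case 0 then show ?case by (cases k) auto
next
  case (Suc s)
  then obtain k' where k: "k = Suc k'" "s < k'" by (cases k) auto
  show ?case unfolding k funpow_Suc_right comp_def pderiv_lin_pow using Suc.IH k(2) by blast
qed

lemma pderiv_exact:
  "poly ((pderiv^^k) ([:-a,1:]^k * (R::complex poly))) a = fact k * poly R a"
proof (induction k arbitrary: R)
  case 0 then show ?case by simp
next
  case (Suc k)
  show ?case unfolding funpow_Suc_right comp_def pderiv_lin_pow Suc.IH
    by (simp add: algebra_simps)
qed

lemma order_prod_lin:
  fixes n :: nat shows "order a (\<Prod>k<n. [:-b k, 1:]) = card {k. k < n \<and> b k = (a::complex)}"
proof (induction n)
  case 0 then show ?case by (simp add: order_0I)
next
  case (Suc n)
  have nz: "(\<Prod>k<n. [:-b k, 1:]) \<noteq> 0" by (simp add: prod_zero_iff)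
  have "order a (\<Prod>k<Suc n. [:-b k, 1:]) = order a (\<Prod>k<n. [:-b k, 1:]) + order a [:-b n, 1:]"
  proof -
    have "(\<Prod>k<n. [:-b k, 1:]) * [:-b n, 1:] \<noteq> 0"
      using nz by (metis mult_eq_0_iff pCons_eq_0_iff one_neq_zero)
    then show ?thesis unfolding prod.lessThan_Suc by (rule order_mult)
  qed
  also have "order a [:-b n, 1:] = (if b n = a then 1 else 0)"
    using order_power_n_n[of a 1] by (auto intro!: order_0I)
  also have "{k. k < Suc n \<and> b k = a} = {k. k < n \<and> b k = a} \<union> (if b n = a then {n} else {})"
    by (auto simp: less_Suc_eq)
  ultimately show ?case using Suc.IH by (auto simp: card_insert_if)
qed


lemma cr_rat: "complex_of_real (of_rat r) = of_rat r"
  by (cases r) (simp add: of_rat_rat)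

lemma gauss_dense:
  assumes "\<delta> > 0"
  shows "\<exists>q\<in>gauss_rat. q \<noteq> 0 \<and> norm (q - K) < \<delta>"
proof -
  obtain a1 where a1: "a1 \<in> \<rat>" "Re K < a1" "a1 < Re K + \<delta>/4"
    using Rats_dense_in_real[of "Re K" "Re K + \<delta>/4"] assms by auto
  obtain a2 where a2: "a2 \<in> \<rat>" "Re K + \<delta>/4 < a2" "a2 < Re K + \<delta>/2"
    using Rats_dense_in_real[of "Re K + \<delta>/4" "Re K + \<delta>/2"] assms by auto
  obtain b where b: "b \<in> \<rat>" "Im K < b" "b < Im K + \<delta>/2"
    using Rats_dense_in_real[of "Im K" "Im K + \<delta>/2"] assms by auto
  define a where "a = (if a1 \<noteq> 0 then a1 else a2)"
  have a: "a \<in> \<rat>" "a \<noteq> 0" "\<bar>a - Re K\<bar> < \<delta>/2"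
    using a1 a2 by (auto simp: a_def)
  obtain ra where ra: "a = of_rat ra" using a(1) Rats_cases by blast
  obtain rb where rb: "b = of_rat rb" using b(1) Rats_cases by blast
  define q where "q = Complex a b"
  have "q = of_rat ra + \<i> * of_rat rb"
    unfolding q_def Complex_eq ra rb by (simp add: cr_rat)
  hence "q \<in> gauss_rat" unfolding gauss_rat_def by blast
  moreover have "q \<noteq> 0" using a(2) by (simp add: q_def complex_eq_iff)
  moreover have "norm (q - K) < \<delta>"
  proof -
    have "norm (q - K) \<le> \<bar>Re (q - K)\<bar> + \<bar>Im (q - K)\<bar>" by (rule cmod_le)
    also have "\<dots> < \<delta>/2 + \<delta>/2" using a(3) b by (intro add_strict_mono) (auto simp: q_def)
    finally show ?thesis by simp
  qed
  ultimately show ?thesis by blast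
qed

lemma norm_poly_le: "norm (poly p (z::complex)) \<le> (\<Sum>i\<le>degree p. norm (coeff p i) * norm z ^ i)"
  unfolding poly_altdef by (rule order_trans[OF norm_sum]) (simp add: norm_mult norm_power)

lemma pderiv_iter_degree: "degree ((pderiv^^s) (p::complex poly)) = degree p - s"
  by (induction s) (auto simp: degree_pderiv)

lemma pderiv_iter_zero: "(pderiv^^(Suc (degree p))) (p::complex poly) = 0"
proof -
  have "degree ((pderiv^^(degree p)) p) = 0" by (simp add: pderiv_iter_degree)
  then show ?thesis by (simp add: pderiv_eq_0_iff)
qed

lemma deriv_iter_poly: "(deriv^^s) (poly p) = poly ((pderiv^^s) (p::complex poly))"
proof (induction s)
  case 0 then show ?case by simp
next
  case (Suc s)
  show ?case using poly_DERIV by (auto simp: Suc fun_eq_iff intro!: DERIV_imp_deriv)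
qed

definition alg_enum :: "nat \<Rightarrow> complex" where "alg_enum = from_nat_into {z. algebraic z}"
definition bb :: "nat \<Rightarrow> complex" where "bb m = alg_enum (fst (prod_decode m))"
definition WW :: "nat \<Rightarrow> complex poly" where "WW n = (\<Prod>k<n. [:-bb k, 1:])"
definition mu :: "nat \<Rightarrow> nat" where "mu m = card {k. k < m \<and> bb k = bb m}"
definition BB :: "nat \<Rightarrow> real" where
  "BB n = 1 + (\<Sum>s\<le>n. \<Sum>i\<le>degree ((pderiv^^s) (WW n)). norm (coeff ((pderiv^^s) (WW n)) i) * real n ^ i)"
definition LL :: "nat \<Rightarrow> complex" where "LL m = poly ((pderiv^^mu m) (WW m)) (bb m)"
definition KK :: "(nat \<Rightarrow> complex) \<Rightarrow> nat \<Rightarrow> complex" where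
  "KK c m = (\<Sum>n<m. c n * poly ((pderiv^^mu m) (WW n)) (bb m))"
definition good :: "(nat \<Rightarrow> complex) \<Rightarrow> nat \<Rightarrow> complex \<Rightarrow> bool" where
  "good c m x \<longleftrightarrow> KK c m + x * LL m \<in> gauss_rat \<and> KK c m + x * LL m \<noteq> 0 \<and> norm x \<le> (1/2)^m / BB m"
definition step :: "(nat \<Rightarrow> complex) \<Rightarrow> nat \<Rightarrow> complex" where "step c m = (SOME x. good c m x)"
fun cs :: "nat \<Rightarrow> complex list" where
  "cs 0 = []"
| "cs (Suc m) = cs m @ [step (\<lambda>n. cs m ! n) m]"
definition cc :: "nat \<Rightarrow> complex" where "cc m = cs (Suc m) ! m"
definition FF :: "nat \<Rightarrow> complex \<Rightarrow> complex" where
  "FF s z = (\<Sum>n. cc n * poly ((pderiv^^s) (WW n)) z)"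

lemma WW_nz: "WW n \<noteq> 0"
  by (simp add: WW_def prod_zero_iff)

lemma order_WW: "order a (WW n) = card {k. k < n \<and> bb k = a}"
  unfolding WW_def by (rule order_prod_lin)

lemma LL_nz: "LL m \<noteq> 0"
proof -
  obtain q where q: "WW m = [:-bb m, 1:] ^ order (bb m) (WW m) * q" "\<not> [:-bb m, 1:] dvd q"
    using order_decomp[OF WW_nz] by blast
  have o: "order (bb m) (WW m) = mu m" by (simp add: order_WW mu_def)
  have "poly q (bb m) \<noteq> 0" using q(2) poly_eq_0_iff_dvd by blast
  have "LL m = fact (mu m) * poly q (bb m)"
    unfolding LL_def by (subst q(1), subst o, rule pderiv_exact)
  then show ?thesis using \<open>poly q (bb m) \<noteq> 0\<close> by simp
qed

lemma vanish: "m < n \<Longrightarrow> poly ((pderiv^^mu m) (WW n)) (bb m) = 0"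
proof -
  assume mn: "m < n"
  obtain q where q: "WW n = [:-bb m, 1:] ^ order (bb m) (WW n) * q"
    using order_decomp[OF WW_nz] by blast
  have "insert m {k. k < m \<and> bb k = bb m} \<subseteq> {k. k < n \<and> bb k = bb m}" using mn by auto
  hence "card (insert m {k. k < m \<and> bb k = bb m}) \<le> card {k. k < n \<and> bb k = bb m}"
    by (intro card_mono) auto
  hence "mu m < order (bb m) (WW n)" by (simp add: order_WW mu_def)
  then have "poly ((pderiv^^mu m) ([:-bb m, 1:] ^ order (bb m) (WW n) * q)) (bb m) = 0"
    by (rule pderiv_vanish)
  then show ?thesis using q by simp
qed

lemma BB_pos: "BB n \<ge> 1"
  unfolding BB_def by (auto intro!: sum_nonneg)

lemma ex_good: "\<exists>x. good c m x"
proof -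
  define \<delta> where "\<delta> = norm (LL m) * (1/2)^m / BB m"
  have "\<delta> > 0" unfolding \<delta>_def using LL_nz BB_pos[of m] by (auto intro!: divide_pos_pos)
  then obtain q where q: "q \<in> gauss_rat" "q \<noteq> 0" "norm (q - KK c m) < \<delta>"
    using gauss_dense by blast
  define x where "x = (q - KK c m) / LL m"
  have "KK c m + x * LL m = q" using LL_nz by (simp add: x_def)
  moreover have "norm x \<le> (1/2)^m / BB m"
  proof -
    have "norm x = norm (q - KK c m) / norm (LL m)" by (simp add: x_def norm_divide)
    also have "\<dots> \<le> \<delta> / norm (LL m)" using q(3) LL_nz by (intro divide_right_mono) auto
    also have "\<dots> = (1/2)^m / BB m" using LL_nz by (simp add: \<delta>_def)
    finally show ?thesis .
  qed
  ultimately show ?thesis using q unfolding good_def by auto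
qed

lemma length_cs: "length (cs m) = m"
  by (induction m) auto

lemma cs_prefix: "n < m \<Longrightarrow> cs (m + j) ! n = cs m ! n"
  by (induction j) (auto simp: nth_append length_cs)

lemma cs_cc: "n < m \<Longrightarrow> cs m ! n = cc n"
proof -
  assume "n < m"
  then obtain j where j: "m = Suc n + j" using less_iff_Suc_add by auto
  have "cs (Suc n + j) ! n = cs (Suc n) ! n" by (rule cs_prefix) simp
  then show ?thesis unfolding cc_def j .
qed

lemma good_cc: "good cc m (cc m)"
proof -
  have e: "cc m = step (\<lambda>n. cs m ! n) m" by (simp add: cc_def nth_append length_cs)
  have g: "good (\<lambda>n. cs m ! n) m (cc m)" unfolding e step_def by (rule someI_ex, rule ex_good)
  have "KK (\<lambda>n. cs m ! n) m = KK cc m" unfolding KK_def by (intro sum.cong) (auto simp: cs_cc)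
  with g show ?thesis by (simp add: good_def)
qed

lemma term_bound:
  assumes "s \<le> n" "norm z \<le> real n"
  shows "norm (cc n * poly ((pderiv^^s) (WW n)) z) \<le> (1/2)^n"
proof -
  let ?p = "(pderiv^^s) (WW n)"
  have "norm (poly ?p z) \<le> (\<Sum>i\<le>degree ?p. norm (coeff ?p i) * norm z ^ i)" by (rule norm_poly_le)
  also have "\<dots> \<le> (\<Sum>i\<le>degree ?p. norm (coeff ?p i) * real n ^ i)"
    using assms(2) by (intro sum_mono mult_left_mono power_mono) auto
  also have "\<dots> \<le> (\<Sum>s\<le>n. \<Sum>i\<le>degree ((pderiv^^s) (WW n)). norm (coeff ((pderiv^^s) (WW n)) i) * real n ^ i)"
    using assms(1) by (intro member_le_sum[where f = "\<lambda>s. \<Sum>i\<le>degree ((pderiv^^s) (WW n)). norm (coeff ((pderiv^^s) (WW n)) i) * real n ^ i"]) (auto intro!: sum_nonneg)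
  also have "\<dots> \<le> BB n" by (simp add: BB_def)
  finally have P: "norm (poly ?p z) \<le> BB n" .
  have C: "norm (cc n) \<le> (1/2)^n / BB n" using good_cc[of n] by (simp add: good_def)
  have "norm (cc n * poly ?p z) = norm (cc n) * norm (poly ?p z)" by (simp add: norm_mult)
  also have "\<dots> \<le> ((1/2)^n / BB n) * BB n"
    using C P BB_pos[of n] by (intro mult_mono) auto
  also have "\<dots> = (1/2)^n" using BB_pos[of n] by simp
  finally show ?thesis .
qed

lemma ev_bound: "eventually (\<lambda>n. \<forall>z\<in>ball 0 R. norm (cc n * poly ((pderiv^^s) (WW n)) z) \<le> (1/2)^n) sequentially"
proof -
  have "\<forall>n\<ge>max s (nat \<lceil>R\<rceil>). \<forall>z\<in>ball 0 R. norm (cc n * poly ((pderiv^^s) (WW n)) z) \<le> (1/2)^n"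
  proof (intro allI impI ballI term_bound)
    fix n z assume n: "max s (nat \<lceil>R\<rceil>) \<le> n" and z: "z \<in> ball (0::complex) R"
    show "s \<le> n" using n by simp
    have "norm z < R" using z by simp
    also have "R \<le> real (nat \<lceil>R\<rceil>)" by linarith
    also have "\<dots> \<le> real n" using n by simp
    finally show "norm z \<le> real n" by simp
  qed
  then show ?thesis unfolding eventually_sequentially by blast
qed

lemma summable_half: "summable (\<lambda>n. (1/2::real)^n)"
  by (rule summable_geometric) simp

lemma FF_summable: "summable (\<lambda>n. cc n * poly ((pderiv^^s) (WW n)) z)"
proof -
  have "eventually (\<lambda>n. norm (cc n * poly ((pderiv^^s) (WW n)) z) \<le> (1/2)^n) sequentially"
    using ev_bound[of "norm z + 1" s] by (rule eventually_mono) auto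
  then show ?thesis using summable_half
    by (metis (no_types, lifting) eventually_sequentially summable_comparison_test')
qed

lemma FF_deriv: "(FF s has_field_derivative FF (Suc s) z) (at z)"
proof -
  have "((\<lambda>x. \<Sum>n. cc n * poly ((pderiv^^s) (WW n)) x) has_field_derivative
         (\<Sum>n. cc n * poly ((pderiv^^(Suc s)) (WW n)) z)) (at z)"
  proof (rule has_field_derivative_series'(2)[of "ball 0 (norm z + 1)"
      "\<lambda>n x. cc n * poly ((pderiv^^s) (WW n)) x" "\<lambda>n x. cc n * poly ((pderiv^^(Suc s)) (WW n)) x" 0])
    show "convex (ball (0::complex) (norm z + 1))" by simp
    show "\<And>n x. x \<in> ball 0 (norm z + 1) \<Longrightarrow>
      ((\<lambda>x. cc n * poly ((pderiv^^s) (WW n)) x) has_field_derivative cc n * poly ((pderiv^^(Suc s)) (WW n)) x)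
       (at x within ball 0 (norm z + 1))"
    proof -
      fix n x
      have "((\<lambda>x. cc n * poly ((pderiv^^s) (WW n)) x) has_field_derivative cc n * poly (pderiv ((pderiv^^s) (WW n))) x) (at x)"
        by (rule DERIV_cmult[OF poly_DERIV])
      then show "((\<lambda>x. cc n * poly ((pderiv^^s) (WW n)) x) has_field_derivative cc n * poly ((pderiv^^(Suc s)) (WW n)) x)
       (at x within ball 0 (norm z + 1))"
        by (simp add: has_field_derivative_at_within)
    qed
    show "uniformly_convergent_on (ball 0 (norm z + 1)) (\<lambda>n x. \<Sum>i<n. cc i * poly ((pderiv^^(Suc s)) (WW i)) x)"
      by (rule Weierstrass_m_test'_ev[OF ev_bound summable_half])
    show "(0::complex) \<in> ball 0 (norm z + 1)" using norm_ge_zero[of z] by (simp del: norm_ge_zero)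
    show "summable (\<lambda>n. cc n * poly ((pderiv^^s) (WW n)) 0)" by (rule FF_summable)
    show "z \<in> interior (ball 0 (norm z + 1))" by simp
  qed
  then show ?thesis unfolding FF_def[abs_def] .
qed

lemma deriv_FF: "(deriv^^s) (FF 0) = FF s"
proof (induction s)
  case 0 then show ?case by simp
next
  case (Suc s)
  show ?case by (auto simp: Suc fun_eq_iff intro!: DERIV_imp_deriv FF_deriv)
qed

lemma FF_value: "FF (mu m) (bb m) = KK cc m + cc m * LL m"
proof -
  have "FF (mu m) (bb m) = (\<Sum>n\<in>{..<Suc m}. cc n * poly ((pderiv^^mu m) (WW n)) (bb m))"
    unfolding FF_def by (rule suminf_finite) (auto simp: vanish)
  also have "\<dots> = KK cc m + cc m * LL m" by (simp add: KK_def LL_def)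
  finally show ?thesis .
qed

lemma hits:
  assumes "algebraic \<alpha>"
  shows "\<exists>m. bb m = \<alpha> \<and> mu m = t"
proof -
  have ne: "{z::complex. algebraic z} \<noteq> {}" using algebraic_0 by blast
  have "\<alpha> \<in> range alg_enum" unfolding alg_enum_def using assms range_from_nat_into[OF ne countable_alg] by auto
  then obtain i where i: "alg_enum i = \<alpha>" by auto
  define S where "S = {m. bb m = \<alpha>}"
  have "range (\<lambda>j. prod_encode (i, j)) \<subseteq> S" by (auto simp: S_def bb_def i)
  moreover have "infinite (range (\<lambda>j. prod_encode (i, j)))"
    by (rule range_inj_infinite) (auto simp: inj_def prod_encode_eq)
  ultimately have inf: "infinite S" using finite_subset by blast
  define g where "g j = card {k. k < j \<and> bb k = \<alpha>}" for j
  have gS: "g (Suc j) = g j + (if bb j = \<alpha> then 1 else 0)" for j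
  proof -
    have "{k. k < Suc j \<and> bb k = \<alpha>} = {k. k < j \<and> bb k = \<alpha>} \<union> (if bb j = \<alpha> then {j} else {})"
      by (auto simp: less_Suc_eq)
    then show ?thesis by (auto simp: g_def card_insert_if)
  qed
  have gmono: "j \<le> j' \<Longrightarrow> g j \<le> g j'" for j j'
    unfolding g_def by (intro card_mono) auto
  have unb: "\<exists>j. g j \<ge> u" for u
  proof (induction u)
    case 0 then show ?case by simp
  next
    case (Suc u)
    then obtain j where j: "g j \<ge> u" by blast
    obtain m where m: "m \<ge> j" "m \<in> S" using inf infinite_nat_iff_unbounded_le by blast
    have "g (Suc m) = g m + 1" using m(2) gS by (simp add: S_def)
    then have "g (Suc m) \<ge> Suc u" using gmono[OF m(1)] j by simp
    then show ?case by blast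
  qed
  obtain j0 where j0: "g j0 \<ge> Suc t" using unb by blast
  have ex: "\<exists>m. g (Suc m) > t"
  proof (cases j0)
    case 0 then show ?thesis using j0 by (simp add: g_def)
  next
    case (Suc m) then show ?thesis using j0 by (intro exI[of _ m]) simp
  qed
  define m where "m = (LEAST m. g (Suc m) > t)"
  have m1: "g (Suc m) > t" unfolding m_def using ex by (rule LeastI_ex)
  have m2: "g m \<le> t"
  proof (cases m)
    case 0 then show ?thesis by (simp add: g_def)
  next
    case (Suc m')
    have "m' < (LEAST m. g (Suc m) > t)" using Suc m_def by simp
    hence "\<not> g (Suc m') > t" by (rule not_less_Least)
    then show ?thesis using Suc by simp
  qed
  have "bb m = \<alpha>" using m1 m2 gS[of m] by (auto split: if_splits)
  moreover have "g m = t" using m1 m2 gS[of m] by (auto split: if_splits)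
  ultimately show ?thesis unfolding mu_def g_def by auto
qed

theorem corollary3:
  shows "\<exists>f. transcendental_entire f \<and>
           (\<forall>s::nat. (deriv ^^ s) f ` {z. algebraic z} \<subseteq> gauss_rat)"
proof (intro exI conjI allI)
  have hol: "FF 0 holomorphic_on UNIV"
    unfolding holomorphic_on_def field_differentiable_def using FF_deriv by auto
  have notpoly: "\<not> (\<exists>p. \<forall>z. FF 0 z = poly p z)"
  proof
    assume "\<exists>p. \<forall>z. FF 0 z = poly p z"
    then obtain p where p: "FF 0 = poly p" by auto
    define s where "s = Suc (degree p)"
    obtain m where m: "bb m = 0" "mu m = s" using hits[of 0 s] by auto
    have "FF s = (deriv^^s) (poly p)" using deriv_FF[of s] p by simp
    also have "\<dots> = (\<lambda>_. 0)" unfolding deriv_iter_poly s_def pderiv_iter_zero by auto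
    finally have "FF (mu m) (bb m) = 0" using m by simp
    then show False using good_cc[of m] FF_value[of m] by (simp add: good_def)
  qed
  show "transcendental_entire (FF 0)" unfolding transcendental_entire_def using hol notpoly by blast
  fix s :: nat
  show "(deriv ^^ s) (FF 0) ` {z. algebraic z} \<subseteq> gauss_rat"
  proof
    fix w assume "w \<in> (deriv ^^ s) (FF 0) ` {z. algebraic z}"
    then obtain z where z: "algebraic z" "w = FF s z" using deriv_FF by auto
    obtain m where m: "bb m = z" "mu m = s" using hits[OF z(1)] by blast
    show "w \<in> gauss_rat" using z(2) m FF_value[of m] good_cc[of m] by (auto simp: good_def)
  qed
qed

end
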